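(* Let $r\ge1$ be an integer, $A_N\subset\mathbb{R}$ a finite set, $p_0,q_0$ probability distributions on $(A_N)^r$, and $\epsilon\ge0$, $\alpha\ge0$, $\Delta\ge0$. Then $$\overline{\delta}(\epsilon,\alpha,\Delta)\le\Big\{\overline{d}^{\,2}-(\overline{d}^{\,2}-\Delta^2)\exp\Big(-\frac{\overline{H}(p|p_0)+\alpha\overline{H}(q|q_0)}{\epsilon}\Big)\Big\}^{1/2},$$ where for $\epsilon=0$ the exponential is read as its limit as $\epsilon\downarrow0$.
   Context: $\mathcal{D}(p_0)$ is the set of probability distributions $p$ on pairs $(\vec u,\vec u^0)\in(A_N)^r\times(A_N)^r$ with $\sum_{\vec u}p(\vec u,\vec u^0)=p_0(\vec u^0)$; $\mathcal{D}(q_0)$ likewise for pairs $(\vec v,\vec v^0)$. Under $\mathbb{E}_{p,q}$, $(\vec u,\vec u^0)\sim p$ and $(\vec v,\vec v^0)\sim q$ are independent; $d(p,q)=\{\mathbb{E}_{p,q}|\vec u\cdot\vec v-\vec u^0\cdot\vec v^0|^2\}^{1/2}$; $\phi_\Delta(p,q)=H(p)-H(p_0)+\alpha[H(q)-H(q_0)]+\epsilon\,\mathbb{E}_{p_0,q_0}\log\mathbb{P}_{p,q}\{|\vec u\cdot\vec v-\vec u^0\cdot\vec v^0|\le\Delta\mid\vec u^0,\vec v^0\}$, where $H$ is Shannon entropy (natural log), $(\vec u^0,\vec v^0)\sim p_0\times q_0$ in the outer expectation, and $\vec u\sim p(\cdot|\vec u^0)$, $\vec v\sim q(\cdot|\vec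 v^0)$ independently in the conditional probability. Then $\overline{\delta}(\epsilon,\alpha,\Delta)=\sup\{d(p,q):p\in\mathcal{D}(p_0),q\in\mathcal{D}(q_0),\phi_\Delta(p,q)\ge0\}$. Also $\overline{H}(p|p_0)=\max_{p\in\mathcal{D}(p_0)}H(p)-H(p_0)$, $\overline{H}(q|q_0)=\max_{q\in\mathcal{D}(q_0)}H(q)-H(q_0)$, and $\overline{d}=\max\{|\vec u\cdot\vec v-\vec u^0\cdot\vec v^0|:\vec u,\vec v,\vec u^0,\vec v^0\in(A_N)^r\}$. *)

theory Defs
  imports "HOL-Probability.Probability"
begin

type_synonym vec = "nat \<Rightarrow> real"

definition vecs :: "nat \<Rightarrow> real set \<Rightarrow> vec set" where
  "vecs r A = PiE {..<r} (\<lambda>_. A)"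

definition dotp :: "nat \<Rightarrow> vec \<Rightarrow> vec \<Rightarrow> real" where
  "dotp r u v = (\<Sum>i<r. u i * v i)"

definition entropy_pmf :: "'a pmf \<Rightarrow> real" where
  "entropy_pmf p = - (\<Sum>x\<in>set_pmf p. pmf p x * ln (pmf p x))"

definition Dset :: "nat \<Rightarrow> real set \<Rightarrow> vec pmf \<Rightarrow> (vec \<times> vec) pmf set" where
  "Dset r A p0 = {p. set_pmf p \<subseteq> vecs r A \<times> vecs r A \<and> map_pmf snd p = p0}"

definition dist_pq :: "nat \<Rightarrow> (vec \<times> vec) pmf \<Rightarrow> (vec \<times> vec) pmf \<Rightarrow> real" where
  "dist_pq r p q = sqrt (measure_pmf.expectation (pair_pmf p q)
      (\<lambda>((u, u0), (v, v0)). \<bar>dotp r u v - dotp r u0 v0\<bar>^2))"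

definition ln_ereal :: "real \<Rightarrow> ereal" where
  "ln_ereal x = (if x > 0 then ereal (ln x) else - \<infinity>)"

definition cond_prob :: "nat \<Rightarrow> real \<Rightarrow> (vec \<times> vec) pmf \<Rightarrow> (vec \<times> vec) pmf \<Rightarrow> vec \<Rightarrow> vec \<Rightarrow> real" where
  "cond_prob r \<Delta> p q u0 v0 =
     measure_pmf.prob (pair_pmf (cond_pmf p {x. snd x = u0}) (cond_pmf q {y. snd y = v0}))
       {((u, u0'), (v, v0')). \<bar>dotp r u v - dotp r u0' v0'\<bar> \<le> \<Delta>}"

text \<open>phi_Delta(p,q), valued in the extended reals (the log term may be -infinity;
  with the convention 0 * (-infinity) = 0 when epsilon = 0).\<close>
definition phi :: "nat \<Rightarrow> vec pmf \<Rightarrow> vec pmf \<Rightarrow> real \<Rightarrow> real \<Rightarrow> real \<Rightarrow>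
    (vec \<times> vec) pmf \<Rightarrow> (vec \<times> vec) pmf \<Rightarrow> ereal" where
  "phi r p0 q0 \<epsilon> \<alpha> \<Delta> p q =
     ereal (entropy_pmf p - entropy_pmf p0 + \<alpha> * (entropy_pmf q - entropy_pmf q0))
     + ereal \<epsilon> * (\<Sum>u0\<in>set_pmf p0. \<Sum>v0\<in>set_pmf q0.
          ereal (pmf p0 u0 * pmf q0 v0) * ln_ereal (cond_prob r \<Delta> p q u0 v0))"

definition delta_bar :: "nat \<Rightarrow> real set \<Rightarrow> vec pmf \<Rightarrow> vec pmf \<Rightarrow> real \<Rightarrow> real \<Rightarrow> real \<Rightarrow> real" where
  "delta_bar r A p0 q0 \<epsilon> \<alpha> \<Delta> =
     Sup {dist_pq r p q | p q. p \<in> Dset r A p0 \<and> q \<in> Dset r A q0 \<and> phi r p0 q0 \<epsilon> \<alpha> \<Delta> p q \<ge> 0}"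

definition H_bar :: "nat \<Rightarrow> real set \<Rightarrow> vec pmf \<Rightarrow> real" where
  "H_bar r A p0 = (SUP p\<in>Dset r A p0. entropy_pmf p) - entropy_pmf p0"

definition d_bar :: "nat \<Rightarrow> real set \<Rightarrow> real" where
  "d_bar r A = Max {\<bar>dotp r u v - dotp r u0 v0\<bar> | u v u0 v0.
       u \<in> vecs r A \<and> v \<in> vecs r A \<and> u0 \<in> vecs r A \<and> v0 \<in> vecs r A}"

definition exp_factor :: "real \<Rightarrow> real \<Rightarrow> real" where
  "exp_factor \<epsilon> S = (if \<epsilon> = 0 then Lim (at_right 0) (\<lambda>e. exp (- S / e)) else exp (- S / \<epsilon>))"

end

theory Submission
  imports Defs "HOL-Real_Asymp.Real_Asymp"
begin


lemma expect_sum: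
  assumes "finite F" "set_pmf M \<subseteq> F"
  shows "measure_pmf.expectation M (f::_\<Rightarrow>real) = (\<Sum>x\<in>F. pmf M x * f x)"
  using assms by (subst integral_measure_pmf_real[of F]) (auto simp: mult.commute)

lemma prob_sum:
  assumes "finite F" "set_pmf M \<subseteq> F"
  shows "measure_pmf.prob M X = (\<Sum>x\<in>F. pmf M x * (if x \<in> X then 1 else 0))"
proof -
  have "measure_pmf.prob M X = measure_pmf.expectation M (indicator X)" by simp
  also have "\<dots> = (\<Sum>x\<in>F. pmf M x * (if x \<in> X then 1 else 0))"
    by (subst expect_sum[OF assms]) (auto simp: indicator_def intro!: sum.cong)
  finally show ?thesis .
qed

lemma neg_xlnx_le1: "0 < (x::real) \<Longrightarrow> - (x * ln x) \<le> 1"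
proof -
  assume x: "0 < x"
  have "ln (1/x) \<le> 1/x - 1" using ln_le_minus_one[of "1/x"] x by simp
  then have "- ln x \<le> 1/x - 1" using x by (simp add: ln_div)
  then have "x * (- ln x) \<le> x * (1/x - 1)" using x by (intro mult_left_mono) auto
  moreover have "x * (1/x - 1) = 1 - x" using x by (simp add: field_simps)
  ultimately show ?thesis using x by linarith
qed

lemma entropy_bound:
  assumes "finite F" "set_pmf M \<subseteq> F"
  shows "entropy_pmf M \<le> real (card F)"
proof -
  have fin: "finite (set_pmf M)" using assms finite_subset by blast
  have "entropy_pmf M = (\<Sum>x\<in>set_pmf M. - (pmf M x * ln (pmf M x)))"
    unfolding entropy_pmf_def by (simp add: sum_negf)
  also have "\<dots> \<le> (\<Sum>x\<in>set_pmf M. 1)"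
    by (intro sum_mono neg_xlnx_le1) (simp add: pmf_positive)
  also have "\<dots> = real (card (set_pmf M))" by simp
  also have "\<dots> \<le> real (card F)" using assms by (simp add: card_mono)
  finally show ?thesis .
qed

lemma entropy_map_inj:
  assumes "inj_on f (set_pmf M)"
  shows "entropy_pmf (map_pmf f M) = entropy_pmf M"
  unfolding entropy_pmf_def using assms
  by (simp add: sum.reindex pmf_map_inj)

lemma entropy_pair:
  assumes "finite (set_pmf A)" "finite (set_pmf B)"
  shows "entropy_pmf (pair_pmf A B) = entropy_pmf A + entropy_pmf B"
proof -
  have sA: "(\<Sum>x\<in>set_pmf A. pmf A x) = 1" using sum_pmf_eq_1[OF assms(1)] by simp
  have sB: "(\<Sum>x\<in>set_pmf B. pmf B x) = 1" using sum_pmf_eq_1[OF assms(2)] by simp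
  have "(\<Sum>z\<in>set_pmf A \<times> set_pmf B. pmf (pair_pmf A B) z * ln (pmf (pair_pmf A B) z))
      = (\<Sum>a\<in>set_pmf A. \<Sum>b\<in>set_pmf B. pmf A a * pmf B b * (ln (pmf A a) + ln (pmf B b)))"
    unfolding set_pair_pmf sum.cartesian_product
    by (intro sum.cong refl) (auto simp: pmf_pair ln_mult pmf_positive)
  also have "\<dots> = (\<Sum>a\<in>set_pmf A. pmf A a * ln (pmf A a) * (\<Sum>b\<in>set_pmf B. pmf B b)
        + pmf A a * (\<Sum>b\<in>set_pmf B. pmf B b * ln (pmf B b)))"
    by (simp add: algebra_simps sum.distrib sum_distrib_left)
  also have "\<dots> = (\<Sum>a\<in>set_pmf A. pmf A a * ln (pmf A a)) + (\<Sum>b\<in>set_pmf B. pmf B b * ln (pmf B b))"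
    by (simp add: sB sum.distrib sum_distrib_right[symmetric] sA)
  finally show ?thesis unfolding entropy_pmf_def by simp
qed

lemma sum_le_term_ereal:
  fixes f :: "'a \<Rightarrow> ereal"
  assumes "finite S" "a \<in> S" "\<And>x. x \<in> S \<Longrightarrow> f x \<le> 0"
  shows "sum f S \<le> f a"
proof -
  have "sum f S = f a + sum f (S - {a})" using assms by (simp add: sum.remove)
  also have "sum f (S - {a}) \<le> 0" using assms by (intro sum_nonpos) auto
  hence "f a + sum f (S - {a}) \<le> f a + 0" by (intro add_left_mono)
  finally show ?thesis by simp
qed

lemma sum_snd:
  assumes "map_pmf snd p = p0" "finite (set_pmf p0)"
  shows "(\<Sum>u0\<in>set_pmf p0. if snd a = u0 then pmf p a else 0) = pmf p a"
proof (cases "snd a \<in> set_pmf p0")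
  case True then show ?thesis using assms(2) by (simp add: sum.delta')
next
  case False
  then have "a \<notin> set_pmf p" using assms by force
  then have z: "pmf p a = 0" by (simp add: set_pmf_iff)
  show ?thesis unfolding z by (rule sum.neutral) (simp add: z)
qed

lemma cond_marg:
  assumes "map_pmf snd p = p0" "u0 \<in> set_pmf p0"
  shows "pmf p0 u0 * pmf (cond_pmf p {x. snd x = u0}) a = (if snd a = u0 then pmf p a else 0)"
proof -
  have ne: "set_pmf p \<inter> {x. snd x = u0} \<noteq> {}" using assms by force
  have m: "measure_pmf.prob p {x. snd x = u0} = pmf p0 u0"
    using assms(1) pmf_map[of snd p u0] by (simp add: vimage_def)
  have pos: "pmf p0 u0 > 0" using assms(2) by (simp add: pmf_positive)
  show ?thesis using pos by (simp add: pmf_cond[OF ne] m)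
qed

lemma sum4:
  fixes X :: "'u \<Rightarrow> 'a \<Rightarrow> real"
  shows "(\<Sum>u\<in>U. \<Sum>v\<in>T. \<Sum>a\<in>W. \<Sum>b\<in>W'. X u a * Y v b * I a b)
       = (\<Sum>a\<in>W. \<Sum>b\<in>W'. (\<Sum>u\<in>U. X u a) * (\<Sum>v\<in>T. Y v b) * I a b)"
proof -
  have "(\<Sum>a\<in>W. \<Sum>b\<in>W'. (\<Sum>u\<in>U. X u a) * (\<Sum>v\<in>T. Y v b) * I a b)
     = (\<Sum>a\<in>W. \<Sum>b\<in>W'. \<Sum>u\<in>U. \<Sum>v\<in>T. X u a * Y v b * I a b)"
  proof (intro sum.cong refl)
    fix a b
    have "(\<Sum>u\<in>U. X u a) * (\<Sum>v\<in>T. Y v b) = (\<Sum>u\<in>U. \<Sum>v\<in>T. X u a * Y v b)"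
      by (rule sum_product)
    then show "(\<Sum>u\<in>U. X u a) * (\<Sum>v\<in>T. Y v b) * I a b = (\<Sum>u\<in>U. \<Sum>v\<in>T. X u a * Y v b * I a b)"
      by (simp add: sum_distrib_right)
  qed
  also have "\<dots> = (\<Sum>a\<in>W. \<Sum>u\<in>U. \<Sum>b\<in>W'. \<Sum>v\<in>T. X u a * Y v b * I a b)"
    by (rule sum.cong[OF refl], rule sum.swap)
  also have "\<dots> = (\<Sum>u\<in>U. \<Sum>a\<in>W. \<Sum>b\<in>W'. \<Sum>v\<in>T. X u a * Y v b * I a b)"
    by (rule sum.swap)
  also have "\<dots> = (\<Sum>u\<in>U. \<Sum>a\<in>W. \<Sum>v\<in>T. \<Sum>b\<in>W'. X u a * Y v b * I a b)"
    by (intro sum.cong refl sum.swap)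
  also have "\<dots> = (\<Sum>u\<in>U. \<Sum>v\<in>T. \<Sum>a\<in>W. \<Sum>b\<in>W'. X u a * Y v b * I a b)"
    by (intro sum.cong refl sum.swap)
  finally show ?thesis by simp
qed



lemma finite_vecs: "finite A \<Longrightarrow> finite (vecs r A)"
  unfolding vecs_def by (intro finite_PiE) auto

definition gset :: "nat \<Rightarrow> real set \<Rightarrow> real set" where
  "gset r A = {\<bar>dotp r u v - dotp r u0 v0\<bar> | u v u0 v0.
       u \<in> vecs r A \<and> v \<in> vecs r A \<and> u0 \<in> vecs r A \<and> v0 \<in> vecs r A}"

lemma d_bar_gset: "d_bar r A = Max (gset r A)"
  unfolding d_bar_def gset_def by simp

lemma finite_gset: "finite A \<Longrightarrow> finite (gset r A)"
proof -
  assume fA: "finite A"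
  let ?V = "vecs r A"
  have "gset r A \<subseteq> (\<lambda>(u,v,u0,v0). \<bar>dotp r u v - dotp r u0 v0\<bar>) ` (?V \<times> ?V \<times> ?V \<times> ?V)"
    unfolding gset_def by force
  moreover have "finite (?V \<times> ?V \<times> ?V \<times> ?V)" using finite_vecs[OF fA] by simp
  ultimately show ?thesis by (meson finite_imageI finite_subset)
qed

lemma d_bar_ge:
  assumes "finite A" "u \<in> vecs r A" "v \<in> vecs r A" "u0 \<in> vecs r A" "v0 \<in> vecs r A"
  shows "\<bar>dotp r u v - dotp r u0 v0\<bar> \<le> d_bar r A"
  unfolding d_bar_gset
  by (rule Max_ge[OF finite_gset[OF assms(1)]]) (unfold gset_def, use assms in blast)

lemma d_bar_nonneg:
  assumes "finite A" "u \<in> vecs r A"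
  shows "0 \<le> d_bar r A"
  using d_bar_ge[OF assms(1,2,2,2,2)] by linarith

lemma two_elems:
  assumes "finite A" "u \<in> vecs r A" "d_bar r A > 0"
  shows "\<exists>a b. a \<in> A \<and> b \<in> A \<and> a \<noteq> b"
proof (rule ccontr)
  assume "\<not> ?thesis"
  then have eq: "\<And>a b. a \<in> A \<Longrightarrow> b \<in> A \<Longrightarrow> a = b" by blast
  have veq: "x = y" if "x \<in> vecs r A" "y \<in> vecs r A" for x y
    using that unfolding vecs_def
    by (rule PiE_ext) (use that eq in \<open>auto simp: vecs_def PiE_iff\<close>)
  have "gset r A \<noteq> {}" using assms(2) unfolding gset_def by blast
  moreover have "\<forall>x\<in>gset r A. x \<le> 0" unfolding gset_def
  proof (clarify)
    fix u v u0 v0 assume h: "u \<in> vecs r A" "v \<in> vecs r A" "u0 \<in> vecs r A" "v0 \<in> vecs r A"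
    then have "u = u0" "v = v0" using veq by auto
    then show "\<bar>dotp r u v - dotp r u0 v0\<bar> \<le> 0" by simp
  qed
  ultimately have "d_bar r A \<le> 0" unfolding d_bar_gset
    using finite_gset[OF assms(1)] by simp
  then show False using assms(3) by simp
qed

lemma Dset_sub:
  "p \<in> Dset r A p0 \<Longrightarrow> set_pmf p \<subseteq> vecs r A \<times> vecs r A"
  unfolding Dset_def by auto

lemma bdd_entropy:
  assumes "finite A"
  shows "bdd_above (entropy_pmf ` Dset r A p0)"
proof -
  have "\<forall>x\<in>entropy_pmf ` Dset r A p0. x \<le> real (card (vecs r A \<times> vecs r A))"
    using entropy_bound[of "vecs r A \<times> vecs r A"] finite_vecs[OF assms] Dset_sub by blast
  then show ?thesis by (meson bdd_above.I)
qed

lemma H_bar_ge: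
  assumes "finite A" "p \<in> Dset r A p0"
  shows "entropy_pmf p - entropy_pmf p0 \<le> H_bar r A p0"
  unfolding H_bar_def using cSUP_upper[OF assms(2) bdd_entropy[OF assms(1)]] by simp

lemma diag_in_Dset:
  assumes "set_pmf p0 \<subseteq> vecs r A"
  shows "map_pmf (\<lambda>x. (x, x)) p0 \<in> Dset r A p0"
  unfolding Dset_def using assms by (auto simp: pmf.map_comp o_def)

lemma entropy_diag: "entropy_pmf (map_pmf (\<lambda>x. (x, x)) p0) = entropy_pmf p0"
  by (rule entropy_map_inj) (auto simp: inj_on_def)

lemma H_bar_nonneg:
  assumes "finite A" "set_pmf p0 \<subseteq> vecs r A"
  shows "0 \<le> H_bar r A p0"
  using H_bar_ge[OF assms(1) diag_in_Dset[OF assms(2)]] unfolding entropy_diag by simp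

lemma H_bar_pos:
  assumes "finite A" "set_pmf p0 \<subseteq> vecs r A" "r \<ge> 1" "a \<in> A" "b \<in> A" "a \<noteq> b"
  shows "0 < H_bar r A p0"
proof -
  define w1 where "w1 = restrict (\<lambda>_. a) {..<r}"
  define w2 where "w2 = restrict (\<lambda>_. b) {..<r}"
  have w: "w1 \<in> vecs r A" "w2 \<in> vecs r A" unfolding w1_def w2_def vecs_def
    using assms by (auto simp: restrict_PiE_iff)
  have ne: "w1 \<noteq> w2"
  proof
    assume "w1 = w2"
    then have "w1 0 = w2 0" by simp
    then show False using assms unfolding w1_def w2_def by auto
  qed
  define W where "W = pmf_of_set {w1, w2}"
  have sW: "set_pmf W = {w1, w2}" unfolding W_def by simp
  have eW: "entropy_pmf W = ln 2"
    unfolding entropy_pmf_def sW using ne by (simp add: W_def ln_div)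
  define p where "p = pair_pmf W p0"
  have pD: "p \<in> Dset r A p0"
    unfolding Dset_def p_def using assms(2) w sW by (auto simp: map_snd_pair_pmf)
  have fin0: "finite (set_pmf p0)" using assms(2) finite_vecs[OF assms(1)] finite_subset by blast
  have "entropy_pmf p = ln 2 + entropy_pmf p0"
    unfolding p_def by (subst entropy_pair) (auto simp: sW fin0 eW)
  moreover have "(0::real) < ln 2" by simp
  ultimately show ?thesis using H_bar_ge[OF assms(1) pD] by linarith
qed

lemma exp_factor_pos_eps: "\<epsilon> > 0 \<Longrightarrow> exp_factor \<epsilon> S = exp (- S / \<epsilon>)"
  unfolding exp_factor_def by simp

lemma exp_factor_zero_pos: "S > 0 \<Longrightarrow> exp_factor 0 S = 0"
proof -
  assume S: "S > 0"
  have "filterlim (\<lambda>e::real. - S / e) at_bot (at_right 0)"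
    using S by real_asymp
  then have "((\<lambda>e. exp (- S / e)) \<longlongrightarrow> 0) (at_right 0)"
    by (rule filterlim_compose[OF exp_at_bot])
  then show ?thesis unfolding exp_factor_def by (simp add: tendsto_Lim)
qed

lemma exp_factor_zero_zero: "exp_factor 0 0 = 1"
  unfolding exp_factor_def by (simp add: tendsto_Lim)

lemma exp_factor_nonneg: "\<epsilon> \<ge> 0 \<Longrightarrow> S \<ge> 0 \<Longrightarrow> exp_factor \<epsilon> S \<ge> 0"
  by (cases "\<epsilon> = 0"; cases "S = 0") (auto simp: exp_factor_pos_eps exp_factor_zero_pos exp_factor_zero_zero)



lemma expect_pair_sum:
  assumes "finite W" "set_pmf M \<subseteq> W" "set_pmf N \<subseteq> W"
  shows "measure_pmf.expectation (pair_pmf M N) (f::_\<Rightarrow>real) = (\<Sum>a\<in>W. \<Sum>b\<in>W. pmf M a * pmf N b * f (a, b))"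
  using assms by (subst expect_sum[of "W \<times> W"]) (auto simp: sum.cartesian_product pmf_pair intro!: sum.cong split: prod.splits)

lemma prob_pair_sum:
  assumes "finite W" "set_pmf M \<subseteq> W" "set_pmf N \<subseteq> W"
  shows "measure_pmf.prob (pair_pmf M N) X = (\<Sum>a\<in>W. \<Sum>b\<in>W. pmf M a * pmf N b * (if (a, b) \<in> X then 1 else 0))"
  using assms by (subst prob_sum[of "W \<times> W"]) (auto simp: sum.cartesian_product pmf_pair intro!: sum.cong split: prod.splits)

definition Xs :: "nat \<Rightarrow> real \<Rightarrow> ((vec \<times> vec) \<times> (vec \<times> vec)) set" where
  "Xs r \<Delta> = {((u, u0'), (v, v0')). \<bar>dotp r u v - dotp r u0' v0'\<bar> \<le> \<Delta>}"

lemma decomp: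
  assumes fA: "finite A" and p: "p \<in> Dset r A p0" and q: "q \<in> Dset r A q0"
  shows "(\<Sum>u0\<in>set_pmf p0. \<Sum>v0\<in>set_pmf q0. pmf p0 u0 * pmf q0 v0 * cond_prob r \<Delta> p q u0 v0)
     = measure_pmf.prob (pair_pmf p q) (Xs r \<Delta>)"
proof -
  define W where "W = vecs r A \<times> vecs r A"
  have fW: "finite W" unfolding W_def using finite_vecs[OF fA] by simp
  have sp: "set_pmf p \<subseteq> W" and sq: "set_pmf q \<subseteq> W" using p q unfolding W_def Dset_def by auto
  have mp: "map_pmf snd p = p0" and mq: "map_pmf snd q = q0" using p q unfolding Dset_def by auto
  have f0: "finite (set_pmf p0)" "finite (set_pmf q0)"
  proof -
    have "finite (set_pmf p)" "finite (set_pmf q)" using sp sq fW finite_subset by auto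
    then show "finite (set_pmf p0)" "finite (set_pmf q0)" using mp mq by auto
  qed
  define I where "I a b = (if (a, b) \<in> Xs r \<Delta> then 1 else (0::real))" for a b
  define X where "X u0 a = (if snd a = u0 then pmf p a else 0)" for u0 a
  define Y where "Y v0 b = (if snd b = v0 then pmf q b else 0)" for v0 b
  have "pmf p0 u0 * pmf q0 v0 * cond_prob r \<Delta> p q u0 v0 = (\<Sum>a\<in>W. \<Sum>b\<in>W. X u0 a * Y v0 b * I a b)"
    if u0: "u0 \<in> set_pmf p0" and v0: "v0 \<in> set_pmf q0" for u0 v0
  proof -
    have ne1: "set_pmf p \<inter> {x. snd x = u0} \<noteq> {}" using mp u0 by force
    have ne2: "set_pmf q \<inter> {x. snd x = v0} \<noteq> {}" using mq v0 by force
    have "cond_prob r \<Delta> p q u0 v0 = (\<Sum>a\<in>W. \<Sum>b\<in>W. pmf (cond_pmf p {x. snd x = u0}) a *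
        pmf (cond_pmf q {x. snd x = v0}) b * I a b)"
      unfolding cond_prob_def I_def Xs_def[symmetric]
      by (rule prob_pair_sum[OF fW]) (use sp sq set_cond_pmf[OF ne1] set_cond_pmf[OF ne2] in auto)
    then have "pmf p0 u0 * pmf q0 v0 * cond_prob r \<Delta> p q u0 v0 =
       (\<Sum>a\<in>W. \<Sum>b\<in>W. (pmf p0 u0 * pmf (cond_pmf p {x. snd x = u0}) a) *
        (pmf q0 v0 * pmf (cond_pmf q {x. snd x = v0}) b) * I a b)"
      by (simp add: sum_distrib_left mult_ac)
    also have "\<dots> = (\<Sum>a\<in>W. \<Sum>b\<in>W. X u0 a * Y v0 b * I a b)"
      unfolding X_def Y_def cond_marg[OF mp u0] cond_marg[OF mq v0] ..
    finally show ?thesis .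
  qed
  then have "(\<Sum>u0\<in>set_pmf p0. \<Sum>v0\<in>set_pmf q0. pmf p0 u0 * pmf q0 v0 * cond_prob r \<Delta> p q u0 v0)
      = (\<Sum>u0\<in>set_pmf p0. \<Sum>v0\<in>set_pmf q0. \<Sum>a\<in>W. \<Sum>b\<in>W. X u0 a * Y v0 b * I a b)"
    by (intro sum.cong refl) auto
  also have "\<dots> = (\<Sum>a\<in>W. \<Sum>b\<in>W. (\<Sum>u0\<in>set_pmf p0. X u0 a) * (\<Sum>v0\<in>set_pmf q0. Y v0 b) * I a b)"
    by (rule sum4)
  also have "\<dots> = (\<Sum>a\<in>W. \<Sum>b\<in>W. pmf p a * pmf q b * I a b)"
    unfolding X_def Y_def sum_snd[OF mp f0(1)] sum_snd[OF mq f0(2)] ..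
  also have "\<dots> = measure_pmf.prob (pair_pmf p q) (Xs r \<Delta>)"
    unfolding I_def by (rule prob_pair_sum[OF fW sp sq, symmetric])
  finally show ?thesis .
qed

lemma cond_prob_le1: "cond_prob r \<Delta> p q u0 v0 \<le> 1"
  unfolding cond_prob_def by simp

lemma cond_prob_ge0: "cond_prob r \<Delta> p q u0 v0 \<ge> 0"
  unfolding cond_prob_def by simp



lemma ln_ereal_le0: "x \<le> 1 \<Longrightarrow> ln_ereal x \<le> 0"
  unfolding ln_ereal_def by auto

lemma phi_pos_all:
  fixes p0 q0 :: "vec pmf"
  assumes fin: "finite (set_pmf p0)" "finite (set_pmf q0)" and eps: "\<epsilon> > 0"
    and ph: "phi r p0 q0 \<epsilon> \<alpha> \<Delta> p q \<ge> 0"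
    and u0: "u0 \<in> set_pmf p0" and v0: "v0 \<in> set_pmf q0"
  shows "cond_prob r \<Delta> p q u0 v0 > 0"
proof (rule ccontr)
  assume "\<not> ?thesis"
  then have P0: "cond_prob r \<Delta> p q u0 v0 = 0" using cond_prob_ge0[of r \<Delta> p q u0 v0] by linarith
  define L where "L a b = ereal (pmf p0 a * pmf q0 b) * ln_ereal (cond_prob r \<Delta> p q a b)" for a b
  have Lle: "L a b \<le> 0" for a b
  proof -
    have w0: "pmf p0 a * pmf q0 b \<ge> 0" by simp
    show ?thesis
    proof (cases "cond_prob r \<Delta> p q a b > 0")
      case True
      have "ln (cond_prob r \<Delta> p q a b) \<le> 0" using True cond_prob_le1 by simp
      then have "pmf p0 a * pmf q0 b * ln (cond_prob r \<Delta> p q a b) \<le> 0"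
        using w0 by (intro mult_nonneg_nonpos)
      then show ?thesis unfolding L_def ln_ereal_def using True by simp
    next
      case False
      then show ?thesis unfolding L_def ln_ereal_def using w0
        by (cases "pmf p0 a * pmf q0 b = 0") auto
    qed
  qed
  have w: "pmf p0 u0 * pmf q0 v0 > 0" using u0 v0 by (simp add: pmf_positive)
  have Linf: "L u0 v0 = - \<infinity>" unfolding L_def P0 ln_ereal_def using w u0 v0 by (simp add: set_pmf_iff)
  have "(\<Sum>b\<in>set_pmf q0. L u0 b) \<le> L u0 v0"
    by (rule sum_le_term_ereal[OF fin(2) v0]) (rule Lle)
  then have i: "(\<Sum>b\<in>set_pmf q0. L u0 b) = - \<infinity>" using Linf by simp
  have "(\<Sum>a\<in>set_pmf p0. \<Sum>b\<in>set_pmf q0. L a b) \<le> (\<Sum>b\<in>set_pmf q0. L u0 b)"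
    by (rule sum_le_term_ereal[OF fin(1) u0]) (intro sum_nonpos Lle)
  then have "(\<Sum>a\<in>set_pmf p0. \<Sum>b\<in>set_pmf q0. L a b) = - \<infinity>" using i by simp
  then have "phi r p0 q0 \<epsilon> \<alpha> \<Delta> p q = - \<infinity>"
    unfolding phi_def L_def[symmetric] using eps by simp
  then show False using ph by simp
qed

lemma jensen_part:
  fixes p0 q0 :: "vec pmf"
  assumes fin: "finite (set_pmf p0)" "finite (set_pmf q0)"
    and pos: "\<And>u0 v0. u0 \<in> set_pmf p0 \<Longrightarrow> v0 \<in> set_pmf q0 \<Longrightarrow> P u0 v0 > 0"
  shows "exp (\<Sum>u0\<in>set_pmf p0. \<Sum>v0\<in>set_pmf q0. pmf p0 u0 * pmf q0 v0 * ln (P u0 v0))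
     \<le> (\<Sum>u0\<in>set_pmf p0. \<Sum>v0\<in>set_pmf q0. pmf p0 u0 * pmf q0 v0 * P u0 v0)"
proof -
  let ?S = "set_pmf p0 \<times> set_pmf q0"
  have s1: "(\<Sum>z\<in>?S. pmf p0 (fst z) * pmf q0 (snd z)) = 1"
  proof -
    have "(\<Sum>z\<in>?S. pmf p0 (fst z) * pmf q0 (snd z)) = (\<Sum>a\<in>set_pmf p0. \<Sum>b\<in>set_pmf q0. pmf p0 a * pmf q0 b)"
      by (simp add: sum.cartesian_product split_def)
    also have "\<dots> = (\<Sum>a\<in>set_pmf p0. pmf p0 a) * (\<Sum>b\<in>set_pmf q0. pmf q0 b)"
      by (rule sum_product[symmetric])
    finally show ?thesis
      using sum_pmf_eq_1[OF fin(1) order_refl] sum_pmf_eq_1[OF fin(2) order_refl] by simp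
  qed
  have "exp (\<Sum>z\<in>?S. (pmf p0 (fst z) * pmf q0 (snd z)) *\<^sub>R ln (P (fst z) (snd z)))
      \<le> (\<Sum>z\<in>?S. (pmf p0 (fst z) * pmf q0 (snd z)) * exp (ln (P (fst z) (snd z))))"
    by (rule convex_on_sum[OF _ _ exp_convex s1]) (use fin set_pmf_not_empty in auto)
  also have "\<dots> = (\<Sum>z\<in>?S. (pmf p0 (fst z) * pmf q0 (snd z)) * P (fst z) (snd z))"
    using pos by (intro sum.cong refl) auto
  finally show ?thesis by (simp add: sum.cartesian_product split_def)
qed

lemma key:
  fixes r :: nat and A :: "real set" and p0 q0 :: "vec pmf" and \<epsilon> \<alpha> \<Delta> :: real
  assumes "r \<ge> 1" and fA: "finite A"
    and s0: "set_pmf p0 \<subseteq> vecs r A" and t0: "set_pmf q0 \<subseteq> vecs r A"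
    and eps: "\<epsilon> \<ge> 0" and al: "\<alpha> \<ge> 0" and De: "\<Delta> \<ge> 0"
    and p: "p \<in> Dset r A p0" and q: "q \<in> Dset r A q0"
    and ph: "phi r p0 q0 \<epsilon> \<alpha> \<Delta> p q \<ge> 0"
  shows "dist_pq r p q \<le> sqrt ((d_bar r A)\<^sup>2 - ((d_bar r A)\<^sup>2 - \<Delta>\<^sup>2) *
      exp_factor \<epsilon> (H_bar r A p0 + \<alpha> * H_bar r A q0))"
proof -
  define D where "D = d_bar r A"
  define S where "S = H_bar r A p0 + \<alpha> * H_bar r A q0"
  define EF where "EF = exp_factor \<epsilon> S"
  define W where "W = vecs r A \<times> vecs r A"
  have fW: "finite W" unfolding W_def using finite_vecs[OF fA] by simp
  have sp: "set_pmf p \<subseteq> W" and sq: "set_pmf q \<subseteq> W" using p q unfolding W_def Dset_def by auto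
  have f0: "finite (set_pmf p0)" "finite (set_pmf q0)"
    using s0 t0 finite_vecs[OF fA] by (meson finite_subset)+
  obtain u where u: "u \<in> vecs r A" using s0 set_pmf_not_empty[of p0] by blast
  have D0: "D \<ge> 0" unfolding D_def using d_bar_nonneg[OF fA u] .
  define g where "g a b = \<bar>dotp r (fst a) (fst b) - dotp r (snd a) (snd b)\<bar>" for a b :: "vec \<times> vec"
  define I where "I a b = (if (a, b) \<in> Xs r \<Delta> then 1 else (0::real))" for a b
  have gD: "g a b \<le> D" if "a \<in> W" "b \<in> W" for a b
    using that d_bar_ge[OF fA] unfolding g_def D_def W_def by (auto simp: mem_Times_iff)
  have g0: "g a b \<ge> 0" for a b unfolding g_def by simp
  have gI: "I a b = (if g a b \<le> \<Delta> then 1 else 0)" for a b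
    unfolding I_def g_def Xs_def by (cases a; cases b) auto
  define E where "E = measure_pmf.expectation (pair_pmf p q)
      (\<lambda>((u, u0), (v, v0)). \<bar>dotp r u v - dotp r u0 v0\<bar>^2)"
  have Esum: "E = (\<Sum>a\<in>W. \<Sum>b\<in>W. pmf p a * pmf q b * (g a b)^2)"
    unfolding E_def by (subst expect_pair_sum[OF fW sp sq]) (auto simp: g_def split: prod.splits intro!: sum.cong)
  define Pr where "Pr = measure_pmf.prob (pair_pmf p q) (Xs r \<Delta>)"
  have Prsum: "Pr = (\<Sum>a\<in>W. \<Sum>b\<in>W. pmf p a * pmf q b * I a b)"
    unfolding Pr_def I_def by (rule prob_pair_sum[OF fW sp sq])
  have one: "(\<Sum>a\<in>W. \<Sum>b\<in>W. pmf p a * pmf q b) = 1"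
    using sum_pmf_eq_1[OF fW sp] sum_pmf_eq_1[OF fW sq] by (simp add: sum_product[symmetric])
  have E1: "E \<le> D^2 - (D^2 - \<Delta>^2) * Pr"
  proof -
    have "E \<le> (\<Sum>a\<in>W. \<Sum>b\<in>W. pmf p a * pmf q b * (D^2 - (D^2 - \<Delta>^2) * I a b))"
      unfolding Esum
    proof (intro sum_mono mult_left_mono)
      fix a b assume ab: "a \<in> W" "b \<in> W"
      show "(g a b)^2 \<le> D^2 - (D^2 - \<Delta>^2) * I a b"
      proof (cases "g a b \<le> \<Delta>")
        case True then show ?thesis unfolding gI using g0[of a b] by (simp add: power_mono)
      next
        case False then show ?thesis unfolding gI using g0[of a b] gD[OF ab] by (simp add: power_mono)
      qed
    qed simp
    also have "\<dots> = D^2 * (\<Sum>a\<in>W. \<Sum>b\<in>W. pmf p a * pmf q b) - (D^2 - \<Delta>^2) * Pr"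
      unfolding Prsum by (simp add: algebra_simps sum_distrib_left sum_subtractf sum.distrib)
    finally show ?thesis using one by simp
  qed
  have E2: "E \<le> D^2"
  proof -
    have "E \<le> (\<Sum>a\<in>W. \<Sum>b\<in>W. pmf p a * pmf q b * D^2)"
      unfolding Esum
      by (intro sum_mono mult_left_mono) (use g0 gD in \<open>auto intro: power_mono\<close>)
    also have "\<dots> = D^2" using one by (simp add: sum_distrib_right[symmetric])
    finally show ?thesis .
  qed
  have Pr01: "0 \<le> Pr" unfolding Pr_def by simp
  have S0: "S \<ge> 0" unfolding S_def using H_bar_nonneg[OF fA s0] H_bar_nonneg[OF fA t0] al by simp
  have EF0: "EF \<ge> 0" unfolding EF_def using exp_factor_nonneg eps S0 by simp
  have main: "E \<le> D^2 - (D^2 - \<Delta>^2) * EF"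
  proof (cases "D \<le> \<Delta>")
    case True
    then have "D^2 \<le> \<Delta>^2" using D0 by (simp add: power_mono)
    then have "0 \<le> (\<Delta>^2 - D^2) * EF" using EF0 by simp
    moreover have "(\<Delta>^2 - D^2) * EF = - ((D^2 - \<Delta>^2) * EF)" by (simp add: algebra_simps)
    ultimately show ?thesis using E2 by linarith
  next
    case False
    then have Dpos: "D > 0" "D^2 - \<Delta>^2 > 0" using De by (auto simp: power_strict_mono)
    show ?thesis
    proof (cases "\<epsilon> = 0")
      case True
      obtain a b where ab: "a \<in> A" "b \<in> A" "a \<noteq> b"
        using two_elems[OF fA u] Dpos unfolding D_def by blast
      have "S > 0" unfolding S_def
        using H_bar_pos[OF fA s0 \<open>r \<ge> 1\<close> ab] mult_nonneg_nonneg[OF al H_bar_nonneg[OF fA t0]] by linarith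
      then have "EF = 0" unfolding EF_def True by (rule exp_factor_zero_pos)
      then show ?thesis using E2 by simp
    next
      case False
      then have epos: "\<epsilon> > 0" using eps by simp
      have pos: "cond_prob r \<Delta> p q u0 v0 > 0" if "u0 \<in> set_pmf p0" "v0 \<in> set_pmf q0" for u0 v0
        by (rule phi_pos_all[OF f0 epos ph that])
      define Lr where "Lr = (\<Sum>u0\<in>set_pmf p0. \<Sum>v0\<in>set_pmf q0.
          pmf p0 u0 * pmf q0 v0 * ln (cond_prob r \<Delta> p q u0 v0))"
      define Hp where "Hp = entropy_pmf p - entropy_pmf p0 + \<alpha> * (entropy_pmf q - entropy_pmf q0)"
      have "(\<Sum>u0\<in>set_pmf p0. \<Sum>v0\<in>set_pmf q0.
          ereal (pmf p0 u0 * pmf q0 v0) * ln_ereal (cond_prob r \<Delta> p q u0 v0)) = ereal Lr"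
        unfolding Lr_def sum_ereal[symmetric] using pos
        by (intro sum.cong refl) (auto simp: ln_ereal_def)
      then have "phi r p0 q0 \<epsilon> \<alpha> \<Delta> p q = ereal (Hp + \<epsilon> * Lr)"
        unfolding phi_def Hp_def by simp
      then have HL: "Hp + \<epsilon> * Lr \<ge> 0" using ph by simp
      have "Hp \<le> S" unfolding Hp_def S_def
        using H_bar_ge[OF fA p] H_bar_ge[OF fA q] al by (simp add: mult_left_mono add_mono)
      then have "- S \<le> \<epsilon> * Lr" using HL by simp
      then have "- S \<le> Lr * \<epsilon>" by (simp add: mult.commute)
      then have "- S / \<epsilon> \<le> Lr" by (simp only: pos_divide_le_eq[OF epos])
      then have "EF \<le> exp Lr" unfolding EF_def exp_factor_pos_eps[OF epos] by simp
      also have "exp Lr \<le> Pr"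
        unfolding Lr_def Pr_def decomp[OF fA p q, symmetric]
        by (rule jensen_part[OF f0 pos])
      finally have "EF \<le> Pr" .
      then have "(D^2 - \<Delta>^2) * EF \<le> (D^2 - \<Delta>^2) * Pr" using Dpos by simp
      then show ?thesis using E1 by simp
    qed
  qed
  have "dist_pq r p q = sqrt E" unfolding dist_pq_def E_def ..
  then show ?thesis using main unfolding D_def[symmetric] S_def[symmetric] EF_def[symmetric] by simp
qed



lemma cond_prob_diag:
  assumes u0: "u0 \<in> set_pmf p0" and v0: "v0 \<in> set_pmf q0" and De: "\<Delta> \<ge> 0"
  shows "cond_prob r \<Delta> (map_pmf (\<lambda>x. (x, x)) p0) (map_pmf (\<lambda>x. (x, x)) q0) u0 v0 = 1"
proof -
  let ?p = "map_pmf (\<lambda>x. (x, x)) p0" and ?q = "map_pmf (\<lambda>x. (x, x)) q0"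
  have ne1: "set_pmf ?p \<inter> {x. snd x = u0} \<noteq> {}" using u0 by force
  have ne2: "set_pmf ?q \<inter> {x. snd x = v0} \<noteq> {}" using v0 by force
  show ?thesis unfolding cond_prob_def
    by (subst measure_pmf.prob_eq_1)
       (use De in \<open>auto simp: AE_measure_pmf_iff set_cond_pmf[OF ne1] set_cond_pmf[OF ne2]\<close>)
qed

lemma phi_diag:
  assumes fin: "finite (set_pmf p0)" "finite (set_pmf q0)" and De: "\<Delta> \<ge> 0"
  shows "phi r p0 q0 \<epsilon> \<alpha> \<Delta> (map_pmf (\<lambda>x. (x, x)) p0) (map_pmf (\<lambda>x. (x, x)) q0) = 0"
proof -
  have "(\<Sum>u0\<in>set_pmf p0. \<Sum>v0\<in>set_pmf q0. ereal (pmf p0 u0 * pmf q0 v0) *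
      ln_ereal (cond_prob r \<Delta> (map_pmf (\<lambda>x. (x, x)) p0) (map_pmf (\<lambda>x. (x, x)) q0) u0 v0)) = 0"
    by (intro sum.neutral ballI) (simp add: cond_prob_diag[OF _ _ De] ln_ereal_def)
  then show ?thesis unfolding phi_def entropy_diag by simp
qed

theorem proposition4:
  fixes r :: nat and A :: "real set" and p0 q0 :: "vec pmf" and \<epsilon> \<alpha> \<Delta> :: real
  assumes "r \<ge> 1" and "finite A"
    and "set_pmf p0 \<subseteq> vecs r A" and "set_pmf q0 \<subseteq> vecs r A"
    and "\<epsilon> \<ge> 0" and "\<alpha> \<ge> 0" and "\<Delta> \<ge> 0"
  shows "delta_bar r A p0 q0 \<epsilon> \<alpha> \<Delta> \<le>
    sqrt ((d_bar r A)\<^sup>2 - ((d_bar r A)\<^sup>2 - \<Delta>\<^sup>2) *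
      exp_factor \<epsilon> (H_bar r A p0 + \<alpha> * H_bar r A q0))"
proof -
  have f0: "finite (set_pmf p0)" "finite (set_pmf q0)"
    using assms(3,4) finite_vecs[OF assms(2)] by (meson finite_subset)+
  let ?X = "{dist_pq r p q | p q. p \<in> Dset r A p0 \<and> q \<in> Dset r A q0 \<and> phi r p0 q0 \<epsilon> \<alpha> \<Delta> p q \<ge> 0}"
  have "dist_pq r (map_pmf (\<lambda>x. (x, x)) p0) (map_pmf (\<lambda>x. (x, x)) q0) \<in> ?X"
    using diag_in_Dset[OF assms(3)] diag_in_Dset[OF assms(4)] phi_diag[OF f0 assms(7)] by fastforce
  then have ne: "?X \<noteq> {}" by blast
  show ?thesis unfolding delta_bar_def
    by (rule cSup_least[OF ne]) (use key[OF assms] in blast)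
qed

end
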